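(* Let $T$ be a tree of order $n\geq 3$ and let $\mathcal{G}$ be an arbitrary Abelian group of order at least $5$. Then there exists a labeling $f\colon E(T)\to\mathcal{G}$ with $f(e)\neq 0$ for every edge $e$, $w_f(v)\neq 0$ for every vertex $v$, and $w_f(u)\neq w_f(v)$ for every edge $uv$.
   Context: $w_f(v)=\sum_{u\in N(v)}f(uv)$, the sum taken in $\mathcal{G}$; $0$ is the identity of $\mathcal{G}$. *)

theory Defs
  imports Main
begin

definition simple_graph :: "'a set \<Rightarrow> 'a set set \<Rightarrow> bool" where
  "simple_graph V E \<longleftrightarrow> finite V \<and> (\<forall>e\<in>E. card e = 2 \<and> e \<subseteq> V)"

definition is_walk :: "'a set set \<Rightarrow> 'a list \<Rightarrow> bool" where
  "is_walk E xs \<longleftrightarrow> xs \<noteq> [] \<and> (\<forall>i. Suc i < length xs \<longrightarrow> {xs ! i, xs ! Suc i} \<in> E)"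

definition connected_graph :: "'a set \<Rightarrow> 'a set set \<Rightarrow> bool" where
  "connected_graph V E \<longleftrightarrow>
     (\<forall>u\<in>V. \<forall>v\<in>V. \<exists>xs. is_walk E xs \<and> hd xs = u \<and> last xs = v)"

definition is_cycle :: "'a set set \<Rightarrow> 'a list \<Rightarrow> bool" where
  "is_cycle E xs \<longleftrightarrow> length xs \<ge> 3 \<and> distinct xs \<and> is_walk E xs \<and> {last xs, hd xs} \<in> E"

definition acyclic_graph :: "'a set set \<Rightarrow> bool" where
  "acyclic_graph E \<longleftrightarrow> \<not> (\<exists>xs. is_cycle E xs)"

definition is_tree :: "'a set \<Rightarrow> 'a set set \<Rightarrow> bool" where
  "is_tree V E \<longleftrightarrow> simple_graph V E \<and> V \<noteq> {} \<and> connected_graph V E \<and> acyclic_graph E"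

definition weight :: "'a set \<Rightarrow> 'a set set \<Rightarrow> ('a set \<Rightarrow> 'g::comm_monoid_add) \<Rightarrow> 'a \<Rightarrow> 'g" where
  "weight V E f v = (\<Sum>u\<in>{u\<in>V. {u, v} \<in> E}. f {u, v})"

end

theory Submission
  imports Defs
begin


definition adj :: "'a set set \<Rightarrow> 'a \<Rightarrow> 'a \<Rightarrow> bool" where
  "adj E u v \<longleftrightarrow> {u, v} \<in> E"

lemma adj_sym: "adj E u v \<Longrightarrow> adj E v u"
  by (simp add: adj_def insert_commute)

lemma rtr_sym: "(adj E)\<^sup>*\<^sup>* u v \<Longrightarrow> (adj E)\<^sup>*\<^sup>* v u"
proof (induction rule: rtranclp_induct)
  case base then show ?case by simp
next
  case (step y z) then show ?case
    by (meson adj_sym converse_rtranclp_into_rtranclp)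
qed

lemma walk_single [simp]: "is_walk E [x]"
  by (simp add: is_walk_def)

lemma walk_Cons2: "is_walk E (x # y # xs) \<longleftrightarrow> {x, y} \<in> E \<and> is_walk E (y # xs)"
proof
  assume H: "is_walk E (x # y # xs)"
  have "{x, y} \<in> E" using H unfolding is_walk_def by (metis One_nat_def length_Cons
        less_Suc_eq_0_disj nth_Cons_0 nth_Cons_Suc zero_less_Suc)
  moreover have "is_walk E (y # xs)" unfolding is_walk_def
  proof (intro conjI allI impI)
    fix i assume "Suc i < length (y # xs)"
    then have "Suc (Suc i) < length (x # y # xs)" by simp
    then have "{(x # y # xs) ! Suc i, (x # y # xs) ! Suc (Suc i)} \<in> E"
      using H unfolding is_walk_def by blast
    then show "{(y # xs) ! i, (y # xs) ! Suc i} \<in> E" by simp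
  qed simp
  ultimately show "{x, y} \<in> E \<and> is_walk E (y # xs)" by blast
next
  assume H: "{x, y} \<in> E \<and> is_walk E (y # xs)"
  show "is_walk E (x # y # xs)" unfolding is_walk_def
  proof (intro conjI allI impI)
    fix i assume i: "Suc i < length (x # y # xs)"
    show "{(x # y # xs) ! i, (x # y # xs) ! Suc i} \<in> E"
    proof (cases i)
      case 0 then show ?thesis using H by simp
    next
      case (Suc j)
      then have "Suc j < length (y # xs)" using i by simp
      then have "{(y # xs) ! j, (y # xs) ! Suc j} \<in> E" using H unfolding is_walk_def by blast
      then show ?thesis using Suc by simp
    qed
  qed simp
qed

lemma walk_mono: "is_walk E xs \<Longrightarrow> E \<subseteq> E' \<Longrightarrow> is_walk E' xs"
  unfolding is_walk_def by blast

lemma walk_rtr: "is_walk E xs \<Longrightarrow> (adj E)\<^sup>*\<^sup>* (hd xs) (last xs)"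
proof (induction xs)
  case Nil then show ?case by (simp add: is_walk_def)
next
  case (Cons x xs)
  show ?case
  proof (cases xs)
    case Nil then show ?thesis by simp
  next
    case (Cons y ys)
    then have "{x, y} \<in> E" "is_walk E xs" using Cons.prems by (auto simp: walk_Cons2)
    then have "(adj E)\<^sup>*\<^sup>* y (last xs)" using Cons.IH Cons by auto
    moreover have "adj E x y" using \<open>{x, y} \<in> E\<close> by (simp add: adj_def)
    ultimately have "(adj E)\<^sup>*\<^sup>* x (last xs)" by (meson converse_rtranclp_into_rtranclp)
    then show ?thesis using Cons by simp
  qed
qed

lemma walk_suffix: "is_walk E (as @ bs) \<Longrightarrow> bs \<noteq> [] \<Longrightarrow> is_walk E bs"
proof (induction as)
  case Nil then show ?case by simp
next
  case (Cons a as)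
  then show ?case
    by (cases "as @ bs") (auto simp: walk_Cons2)
qed

lemma rtr_walk: "(adj E)\<^sup>*\<^sup>* u v \<Longrightarrow> \<exists>xs. is_walk E xs \<and> distinct xs \<and> hd xs = u \<and> last xs = v"
proof (induction rule: converse_rtranclp_induct)
  case base then show ?case by (intro exI[of _ "[v]"]) simp
next
  case (step u w)
  then obtain ys where ys: "is_walk E ys" "distinct ys" "hd ys = w" "last ys = v" by blast
  have ne: "ys \<noteq> []" using ys(1) by (simp add: is_walk_def)
  show ?case
  proof (cases "u \<in> set ys")
    case True
    then obtain as bs where "ys = as @ u # bs" by (meson split_list)
    then show ?thesis using ys walk_suffix[of E as "u # bs"]
      by (intro exI[of _ "u # bs"]) auto
  next
    case False
    obtain y ys' where "ys = y # ys'" using ne by (cases ys) auto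
    then show ?thesis using ys False step(1)
      by (intro exI[of _ "u # ys"]) (auto simp: walk_Cons2 adj_def)
  qed
qed

lemma connected_rtr: "connected_graph V E \<longleftrightarrow> (\<forall>u\<in>V. \<forall>v\<in>V. (adj E)\<^sup>*\<^sup>* u v)"
  unfolding connected_graph_def using walk_rtr rtr_walk by metis

lemma acyclic_mono: "acyclic_graph E' \<Longrightarrow> E \<subseteq> E' \<Longrightarrow> acyclic_graph E"
  unfolding acyclic_graph_def is_cycle_def using walk_mono by blast



lemma adjI: "{u, v} \<in> E \<Longrightarrow> adj E u v" by (simp add: adj_def)

lemma edge_card: "simple_graph V E \<Longrightarrow> {u, v} \<in> E \<Longrightarrow> u \<noteq> v"
  unfolding simple_graph_def by force

lemma edge_sub: "simple_graph V E \<Longrightarrow> {u, v} \<in> E \<Longrightarrow> u \<in> V \<and> v \<in> V"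
  unfolding simple_graph_def by blast

lemma edge_ex: "simple_graph V E \<Longrightarrow> e \<in> E \<Longrightarrow> \<exists>u v. e = {u, v} \<and> u \<noteq> v"
  unfolding simple_graph_def by (simp add: card_2_iff)

lemma tree_split:
  assumes tree: "is_tree V E" and e: "{r, x} \<in> E"
  shows "\<exists>Vr Vx Er Ex. is_tree Vr Er \<and> is_tree Vx Ex \<and> r \<in> Vr \<and> x \<in> Vx \<and>
     Vr \<inter> Vx = {} \<and> V = Vr \<union> Vx \<and> E = insert {r, x} (Er \<union> Ex) \<and>
     (\<forall>f. \<forall>v\<in>Vr. weight V E f v = weight Vr Er f v + (if v = r then f {r, x} else 0)) \<and>
     (\<forall>f. \<forall>v\<in>Vx. weight V E f v = weight Vx Ex f v + (if v = x then f {r, x} else 0)) \<and>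
     (\<forall>z. {x, z} \<in> E \<longrightarrow> z \<noteq> r \<longrightarrow> z \<in> Vx)"
proof -
  have sg: "simple_graph V E" and fin: "finite V" and con: "connected_graph V E"
    and acy: "acyclic_graph E" and ne: "V \<noteq> {}"
    using tree by (auto simp: is_tree_def simple_graph_def)
  have rx: "r \<noteq> x" using edge_card[OF sg e] .
  have rV: "r \<in> V" and xV: "x \<in> V" using edge_sub[OF sg e] by auto
  define E' where "E' = E - {{r, x}}"
  define Vr where "Vr = {v. (adj E')\<^sup>*\<^sup>* r v}"
  define Vx where "Vx = {v. (adj E')\<^sup>*\<^sup>* x v}"
  define Er where "Er = {e\<in>E'. e \<subseteq> Vr}"
  define Ex where "Ex = {e\<in>E'. e \<subseteq> Vx}"
  have sub: "(adj E')\<^sup>*\<^sup>* a b \<Longrightarrow> a \<in> V \<Longrightarrow> b \<in> V" for a b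
  proof (induction rule: rtranclp_induct)
    case (step y z) then show ?case using edge_sub[OF sg] by (auto simp: adj_def E'_def)
  qed simp
  have VrV: "Vr \<subseteq> V" using sub rV by (auto simp: Vr_def)
  have VxV: "Vx \<subseteq> V" using sub xV by (auto simp: Vx_def)
  have clos: "{a, b} \<in> E' \<Longrightarrow> (adj E')\<^sup>*\<^sup>* s a \<Longrightarrow> (adj E')\<^sup>*\<^sup>* s b" for a b s
    by (simp add: adj_def rtranclp.rtrancl_into_rtrancl)
  have clos2: "{a, b} \<in> E' \<Longrightarrow> (adj E')\<^sup>*\<^sup>* s b \<Longrightarrow> (adj E')\<^sup>*\<^sup>* s a" for a b s
    using clos[of b a s] by (simp add: insert_commute)
  have disj: "Vr \<inter> Vx = {}"
  proof (rule ccontr)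
    assume "Vr \<inter> Vx \<noteq> {}"
    then obtain v where "(adj E')\<^sup>*\<^sup>* r v" "(adj E')\<^sup>*\<^sup>* x v" by (auto simp: Vr_def Vx_def)
    then have "(adj E')\<^sup>*\<^sup>* r x" using rtr_sym by (metis rtranclp_trans)
    then obtain xs where xs: "is_walk E' xs" "distinct xs" "hd xs = r" "last xs = x"
      using rtr_walk by metis
    have ne: "xs \<noteq> []" using xs by (simp add: is_walk_def)
    have "length xs \<ge> 3"
    proof (rule ccontr)
      assume "\<not> length xs \<ge> 3"
      moreover have "length xs \<noteq> 0" using ne by simp
      ultimately have "length xs = 1 \<or> length xs = 2" by linarith
      then show False
      proof
        assume "length xs = 1"
        then obtain p where "xs = [p]" by (auto simp: length_Suc_conv)
        then show False using xs rx by simp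
      next
        assume "length xs = 2"
        then obtain p q where "xs = [p, q]" by (auto simp: length_Suc_conv numeral_2_eq_2)
        then show False using xs by (simp add: walk_Cons2 E'_def)
      qed
    qed
    moreover have "is_walk E xs" using walk_mono[OF xs(1)] by (auto simp: E'_def)
    moreover have "{last xs, hd xs} \<in> E" using xs e by (simp add: insert_commute)
    ultimately have "is_cycle E xs" using xs by (simp add: is_cycle_def)
    then show False using acy by (auto simp: acyclic_graph_def)
  qed
  have cover: "V = Vr \<union> Vx"
  proof
    show "Vr \<union> Vx \<subseteq> V" using VrV VxV by blast
  next
    show "V \<subseteq> Vr \<union> Vx"
    proof
      fix v assume "v \<in> V"
      then have "(adj E)\<^sup>*\<^sup>* r v" using con rV by (simp add: connected_rtr)
      then show "v \<in> Vr \<union> Vx"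
      proof (induction rule: rtranclp_induct)
        case base then show ?case by (simp add: Vr_def)
      next
        case (step y z)
        show ?case
        proof (cases "{y, z} = {r, x}")
          case True
          then have "z = r \<or> z = x" by (metis insertCI doubleton_eq_iff)
          then show ?thesis by (auto simp: Vr_def Vx_def)
        next
          case False
          then have "{y, z} \<in> E'" using step(2) by (simp add: E'_def adj_def)
          then show ?thesis using step(3) clos by (auto simp: Vr_def Vx_def)
        qed
      qed
    qed
  qed
  have restr: "(adj E')\<^sup>*\<^sup>* s v \<Longrightarrow> (adj {e\<in>E'. e \<subseteq> {w. (adj E')\<^sup>*\<^sup>* s w}})\<^sup>*\<^sup>* s v" for s v
  proof (induction rule: rtranclp_induct)
    case (step y z)
    have "(adj E')\<^sup>*\<^sup>* s z" using step(1,2) by (simp add: rtranclp.rtrancl_into_rtrancl)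
    have "{y, z} \<in> E'" using step(2) by (simp add: adj_def)
    then have "{y, z} \<in> {e\<in>E'. e \<subseteq> {w. (adj E')\<^sup>*\<^sup>* s w}}"
      using step(1) \<open>(adj E')\<^sup>*\<^sup>* s z\<close> by blast
    then have "adj {e\<in>E'. e \<subseteq> {w. (adj E')\<^sup>*\<^sup>* s w}} y z"
      by (rule adjI)
    then show ?case using step(3) by (simp add: rtranclp.rtrancl_into_rtrancl)
  qed simp
  have subtree: "is_tree {w. (adj E')\<^sup>*\<^sup>* s w} {e\<in>E'. e \<subseteq> {w. (adj E')\<^sup>*\<^sup>* s w}}"
    if "s \<in> V" for s
  proof -
    define W where "W = {w. (adj E')\<^sup>*\<^sup>* s w}"
    have WV: "W \<subseteq> V" using sub[OF _ that] unfolding W_def by blast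
    then have fW: "finite W" using fin finite_subset by blast
    have ce: "\<forall>e\<in>{e\<in>E'. e \<subseteq> W}. card e = 2 \<and> e \<subseteq> W"
      using sg unfolding simple_graph_def E'_def by blast
    have s1: "simple_graph W {e\<in>E'. e \<subseteq> W}" unfolding simple_graph_def using fW ce by (rule conjI)
    have "{e\<in>E'. e \<subseteq> W} \<subseteq> E" unfolding E'_def by blast
    then have s2: "acyclic_graph {e\<in>E'. e \<subseteq> W}"
      by (rule acyclic_mono[OF acy])
    have s3: "connected_graph W {e\<in>E'. e \<subseteq> W}"
      unfolding connected_rtr
    proof (intro ballI)
      fix u v assume "u \<in> W" "v \<in> W"
      then have h1: "(adj E')\<^sup>*\<^sup>* s u" and h2: "(adj E')\<^sup>*\<^sup>* s v" unfolding W_def by simp_all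
      have "(adj {e\<in>E'. e \<subseteq> W})\<^sup>*\<^sup>* s u" using restr[OF h1] unfolding W_def .
      moreover have "(adj {e\<in>E'. e \<subseteq> W})\<^sup>*\<^sup>* s v" using restr[OF h2] unfolding W_def .
      ultimately have "(adj {e\<in>E'. e \<subseteq> W})\<^sup>*\<^sup>* u s" "(adj {e\<in>E'. e \<subseteq> W})\<^sup>*\<^sup>* s v"
        using rtr_sym by auto
      then show "(adj {e\<in>E'. e \<subseteq> W})\<^sup>*\<^sup>* u v"
        by (rule rtranclp_trans)
    qed
    have "s \<in> W" unfolding W_def by simp
    then have s4: "W \<noteq> {}" by blast
    have "is_tree W {e\<in>E'. e \<subseteq> W}" unfolding is_tree_def using s1 s2 s3 s4 by blast
    then show ?thesis unfolding W_def .
  qed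
  have EE: "E = insert {r, x} (Er \<union> Ex)"
  proof
    show "insert {r, x} (Er \<union> Ex) \<subseteq> E" using e by (auto simp: Er_def Ex_def E'_def)
  next
    show "E \<subseteq> insert {r, x} (Er \<union> Ex)"
    proof
      fix d assume d: "d \<in> E"
      show "d \<in> insert {r, x} (Er \<union> Ex)"
      proof (cases "d = {r, x}")
        case False
        then have dE': "d \<in> E'" using d by (simp add: E'_def)
        obtain a b where ab: "d = {a, b}" using edge_ex[OF sg d] by blast
        have "a \<in> V" using edge_sub[OF sg] d ab by blast
        then have "a \<in> Vr \<or> a \<in> Vx" using cover by blast
        then show ?thesis using clos[of a b] dE' ab by (auto simp: Er_def Ex_def Vr_def Vx_def)
      qed simp
    qed
  qed
  have nb: "{u\<in>V. {u, v} \<in> E} = {u\<in>Vs. {u, v} \<in> {e\<in>E'. e \<subseteq> Vs}} \<union> (if v = s then {t} else {})"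
    if "Vs = {w. (adj E')\<^sup>*\<^sup>* s w}" "v \<in> Vs" "t \<notin> Vs" "{s, t} = {r, x}" for Vs v s t
  proof -
    have "s \<in> Vs" using that by simp
    have "s = r \<or> s = x" using that(4) by (auto simp: doubleton_eq_iff)
    then have "s \<in> V" using rV xV by blast
    then have VsV: "Vs \<subseteq> V" using that(1) sub by blast
    show ?thesis
    proof (intro set_eqI iffI)
      fix u assume u: "u \<in> {u\<in>V. {u, v} \<in> E}"
      show "u \<in> {u\<in>Vs. {u, v} \<in> {e\<in>E'. e \<subseteq> Vs}} \<union> (if v = s then {t} else {})"
      proof (cases "{u, v} = {r, x}")
        case True
        then have "{u, v} = {s, t}" using that by simp
        then have "v = s \<and> u = t" using that \<open>s \<in> Vs\<close> by (metis doubleton_eq_iff)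
        then show ?thesis by simp
      next
        case False
        then have "{u, v} \<in> E'" using u by (simp add: E'_def)
        then have "u \<in> Vs" using clos2 that by blast
        then show ?thesis using \<open>{u, v} \<in> E'\<close> that by auto
      qed
    next
      fix u assume u: "u \<in> {u\<in>Vs. {u, v} \<in> {e\<in>E'. e \<subseteq> Vs}} \<union> (if v = s then {t} else {})"
      show "u \<in> {u\<in>V. {u, v} \<in> E}"
      proof (cases "u \<in> Vs")
        case True
        then have "{u, v} \<in> E'" using u that(3) by (auto split: if_splits)
        then show ?thesis using VsV True by (auto simp: E'_def)
      next
        case False
        then have "v = s" "u = t" using u by (auto split: if_splits)
        then show ?thesis using that e rV xV by (auto simp: insert_commute doubleton_eq_iff)
      qed
    qed
  qed
  have wsplit: "weight V E f v = weight Vs {e\<in>E'. e \<subseteq> Vs} f v + (if v = s then f {r, x} else 0)"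
    if "Vs = {w. (adj E')\<^sup>*\<^sup>* s w}" "v \<in> Vs" "t \<notin> Vs" "{s, t} = {r, x}" for Vs v s t f
  proof -
    have "s = r \<or> s = x" using that(4) by (auto simp: doubleton_eq_iff)
    then have "s \<in> V" using rV xV by blast
    then have "Vs \<subseteq> V" using that(1) sub by blast
    then have fVs: "finite Vs" using fin finite_subset by blast
    have "weight V E f v = (\<Sum>u\<in>{u\<in>Vs. {u, v} \<in> {e\<in>E'. e \<subseteq> Vs}} \<union> (if v = s then {t} else {}). f {u, v})"
      unfolding weight_def using nb[OF that] by simp
    also have "\<dots> = (\<Sum>u\<in>{u\<in>Vs. {u, v} \<in> {e\<in>E'. e \<subseteq> Vs}}. f {u, v}) + (\<Sum>u\<in>(if v = s then {t} else {}). f {u, v})"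
      by (rule sum.union_disjoint) (use fVs that in auto)
    also have "(\<Sum>u\<in>(if v = s then {t} else {}). f {u, v}) = (if v = s then f {r, x} else 0)"
      using that by (auto simp: insert_commute)
    finally show ?thesis by (simp add: weight_def)
  qed
  show ?thesis
  proof (intro exI conjI)
    show "is_tree Vr Er" unfolding Vr_def Er_def using subtree rV by blast
    show "is_tree Vx Ex" unfolding Vx_def Ex_def using subtree xV by blast
    show "r \<in> Vr" "x \<in> Vx" by (auto simp: Vr_def Vx_def)
    show "Vr \<inter> Vx = {}" by (fact disj)
    show "V = Vr \<union> Vx" by (fact cover)
    show "E = insert {r, x} (Er \<union> Ex)" by (fact EE)
    have xVr: "x \<notin> Vr" and rVx: "r \<notin> Vx" using disj by (auto simp: Vr_def Vx_def)
    show "\<forall>f. \<forall>v\<in>Vr. weight V E f v = weight Vr Er f v + (if v = r then f {r, x} else 0)"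
    proof (intro allI ballI)
      fix f v assume v: "v \<in> Vr"
      show "weight V E f v = weight Vr Er f v + (if v = r then f {r, x} else 0)"
        unfolding Er_def using wsplit[OF Vr_def v xVr refl] .
    qed
    show "\<forall>f. \<forall>v\<in>Vx. weight V E f v = weight Vx Ex f v + (if v = x then f {r, x} else 0)"
    proof (intro allI ballI)
      fix f v assume v: "v \<in> Vx"
      show "weight V E f v = weight Vx Ex f v + (if v = x then f {r, x} else 0)"
        unfolding Ex_def using wsplit[OF Vx_def v rVx insert_commute] .
    qed
    show "\<forall>z. {x, z} \<in> E \<longrightarrow> z \<noteq> r \<longrightarrow> z \<in> Vx"
    proof (intro allI impI)
      fix z assume "{x, z} \<in> E" "z \<noteq> r"
      then have "{x, z} \<in> E'" using rx by (auto simp: E'_def doubleton_eq_iff)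
      then show "z \<in> Vx" by (auto simp: Vx_def adj_def)
    qed
  qed
qed



lemma star_labels:
  fixes s t :: "'g::ab_group_add"
  assumes G: "\<And>p q s t::'g. \<exists>y. y \<notin> {p, q, s, t}"
    and fin: "finite L" and ne: "L \<noteq> {}" and s0: "s \<noteq> 0"
    and c1: "card L = 1 \<Longrightarrow> t \<noteq> 0 \<and> t \<noteq> s"
  shows "\<exists>g. (\<forall>l\<in>L. g l \<noteq> 0 \<and> g l \<noteq> s) \<and> sum g L = t"
  using fin ne c1
proof (induction L arbitrary: t rule: finite_ne_induct)
  case (singleton l)
  then show ?case by (intro exI[of _ "\<lambda>_. t"]) auto
next
  case (insert l F)
  have "\<exists>h. h \<noteq> 0 \<and> h \<noteq> s \<and> (card F = 1 \<longrightarrow> t - h \<noteq> 0 \<and> t - h \<noteq> s)"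
  proof -
    obtain h where h: "h \<notin> {0, s, t, t - s}" using G by blast
    then show ?thesis by (intro exI[of _ h]) (auto simp: algebra_simps)
  qed
  then obtain h where h: "h \<noteq> 0" "h \<noteq> s" "card F = 1 \<Longrightarrow> t - h \<noteq> 0 \<and> t - h \<noteq> s" by blast
  obtain g where g: "\<forall>l\<in>F. g l \<noteq> 0 \<and> g l \<noteq> s" "sum g F = t - h"
    using insert.IH[of "t - h"] h(3) by blast
  have "sum (g(l := h)) (insert l F) = h + sum (g(l := h)) F"
    using insert.hyps by (simp add: sum.insert)
  also have "sum (g(l := h)) F = sum g F"
    using insert.hyps by (intro sum.cong) auto
  finally have "sum (g(l := h)) (insert l F) = t" using g(2) by simp
  then show ?case using g(1) h by (intro exI[of _ "g(l := h)"]) auto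
qed

lemma mainQ:
  fixes a c :: "'g::ab_group_add" and V :: "'a set"
  assumes G: "\<And>p q s t::'g. \<exists>y. y \<notin> {p, q, s, t}"
  shows "is_tree V E \<Longrightarrow> r \<in> V \<Longrightarrow> (a \<noteq> 0 \<or> (\<exists>x z. {r, x} \<in> E \<and> {x, z} \<in> E \<and> z \<noteq> r)) \<Longrightarrow>
    (card V \<ge> 2 \<or> a \<noteq> c) \<Longrightarrow>
    \<exists>f::'a set \<Rightarrow> 'g. (\<forall>e\<in>E. f e \<noteq> 0) \<and>
      (\<forall>v\<in>V. weight V E f v + (if v = r then a else 0) \<noteq> 0) \<and>
      (\<forall>u\<in>V. \<forall>v\<in>V. {u, v} \<in> E \<longrightarrow>
         weight V E f u + (if u = r then a else 0) \<noteq> weight V E f v + (if v = r then a else 0)) \<and>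
      weight V E f r + a \<noteq> c"
proof (induction "card V" arbitrary: V E r a c rule: less_induct)
  case less
  have tree: "is_tree V E" and rV: "r \<in> V" using less.prems by auto
  have sg: "simple_graph V E" and fin: "finite V" and con: "connected_graph V E"
    using tree by (auto simp: is_tree_def simple_graph_def)
  show ?case
  proof (cases "\<exists>x z. {r, x} \<in> E \<and> {x, z} \<in> E \<and> z \<noteq> r")
    case True
    then obtain x z where xz: "{r, x} \<in> E" "{x, z} \<in> E" "z \<noteq> r" by blast
    obtain Vr Vx Er Ex where tr: "is_tree Vr Er" and tx: "is_tree Vx Ex"
      and rVr: "r \<in> Vr" and xVx: "x \<in> Vx" and disj: "Vr \<inter> Vx = {}" and cov: "V = Vr \<union> Vx"
      and EE: "E = insert {r, x} (Er \<union> Ex)"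
      and wr: "\<forall>f::'a set \<Rightarrow> 'g. \<forall>v\<in>Vr. weight V E f v = weight Vr Er f v + (if v = r then f {r, x} else 0)"
      and wx: "\<forall>f::'a set \<Rightarrow> 'g. \<forall>v\<in>Vx. weight V E f v = weight Vx Ex f v + (if v = x then f {r, x} else 0)"
      and zx: "\<forall>z. {x, z} \<in> E \<longrightarrow> z \<noteq> r \<longrightarrow> z \<in> Vx"
      using tree_split[OF tree xz(1)] by (elim exE conjE) (rule that; assumption)
    have xr: "x \<noteq> r" using edge_card[OF sg xz(1)] by simp
    have xVr: "x \<notin> Vr" and rVx: "r \<notin> Vx" using disj rVr xVx by blast+
    have ErV: "\<forall>e\<in>Er. e \<subseteq> Vr" and ExV: "\<forall>e\<in>Ex. e \<subseteq> Vx"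
      and Erc: "\<forall>e\<in>Er. card e = 2" and Exc: "\<forall>e\<in>Ex. card e = 2"
      using tr tx by (auto simp: is_tree_def simple_graph_def)
    have cr: "card Vr < card V"
      using fin cov xVr xVx by (intro psubset_card_mono) auto
    have cx: "card Vx < card V"
      using fin cov rVr rVx by (intro psubset_card_mono) auto
    have zVx: "z \<in> Vx" using zx xz by blast
    have "x \<noteq> z" using edge_card[OF sg xz(2)] .
    moreover have "finite Vx" using fin cov by auto
    ultimately have cx2: "card Vx \<ge> 2"
      using xVx zVx by (metis card_2_iff card_mono empty_subsetI insert_subset)
    obtain y :: 'g where y: "y \<notin> {0, - a, c - a, 0}" using G by blast
    have y0: "y \<noteq> 0" and ay0: "a + y \<noteq> 0" and ayc: "a + y \<noteq> c"
      using y by (auto simp: add_eq_0_iff eq_diff_eq add.commute)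
    obtain fr where fr: "\<forall>e\<in>Er. fr e \<noteq> 0"
      "\<forall>v\<in>Vr. weight Vr Er fr v + (if v = r then a + y else 0) \<noteq> 0"
      "\<forall>u\<in>Vr. \<forall>v\<in>Vr. {u, v} \<in> Er \<longrightarrow>
         weight Vr Er fr u + (if u = r then a + y else 0) \<noteq> weight Vr Er fr v + (if v = r then a + y else 0)"
      "weight Vr Er fr r + (a + y) \<noteq> c"
      using less.hyps[OF cr tr rVr, of "a + y" c] ay0 ayc by blast
    define cc where "cc = weight Vr Er fr r + (a + y)"
    obtain fx where fx: "\<forall>e\<in>Ex. fx e \<noteq> 0"
      "\<forall>v\<in>Vx. weight Vx Ex fx v + (if v = x then y else 0) \<noteq> 0"
      "\<forall>u\<in>Vx. \<forall>v\<in>Vx. {u, v} \<in> Ex \<longrightarrow>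
         weight Vx Ex fx u + (if u = x then y else 0) \<noteq> weight Vx Ex fx v + (if v = x then y else 0)"
      "weight Vx Ex fx x + y \<noteq> cc"
      using less.hyps[OF cx tx xVx, of y cc] y0 cx2 by blast
    define f where "f e = (if e \<in> Er then fr e else if e \<in> Ex then fx e else y)" for e
    have ErEx: "e \<in> Er \<Longrightarrow> e \<notin> Ex" for e
    proof
      assume "e \<in> Er" "e \<in> Ex"
      then have "e \<subseteq> Vr \<inter> Vx" "card e = 2" using ErV ExV Erc by auto
      then show False using disj by auto
    qed
    have rxE: "{r, x} \<notin> Er" "{r, x} \<notin> Ex" using ErV ExV xVr rVx by auto
    have fxy: "f {r, x} = y" using rxE by (simp add: f_def)
    have Wr: "weight V E f v + (if v = r then a else 0) = weight Vr Er fr v + (if v = r then a + y else 0)"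
      if v: "v \<in> Vr" for v
    proof -
      have "weight Vr Er f v = weight Vr Er fr v"
        unfolding weight_def by (intro sum.cong) (auto simp: f_def)
      moreover have "weight V E f v = weight Vr Er f v + (if v = r then f {r, x} else 0)"
        using wr v by blast
      ultimately show ?thesis using fxy by (simp add: algebra_simps)
    qed
    have Wx: "weight V E f v + (if v = r then a else 0) = weight Vx Ex fx v + (if v = x then y else 0)"
      if v: "v \<in> Vx" for v
    proof -
      have "weight Vx Ex f v = weight Vx Ex fx v"
        unfolding weight_def by (intro sum.cong) (auto simp: f_def dest: ErEx)
      moreover have "v \<noteq> r" using v rVx by blast
      moreover have "weight V E f v = weight Vx Ex f v + (if v = x then f {r, x} else 0)"
        using wx v by blast
      ultimately show ?thesis using fxy by simp
    qed
    show ?thesis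
    proof (intro exI[of _ f] conjI ballI impI)
      fix e assume "e \<in> E"
      then show "f e \<noteq> 0" using EE fr(1) fx(1) y0 ErEx by (auto simp: f_def)
    next
      fix v assume "v \<in> V"
      then consider (A) "v \<in> Vr" | (B) "v \<in> Vx" using cov by blast
      then show "weight V E f v + (if v = r then a else 0) \<noteq> 0"
      proof cases
        case A then show ?thesis unfolding Wr[OF A] using fr(2) by blast
      next
        case B then show ?thesis unfolding Wx[OF B] using fx(2) by blast
      qed
    next
      fix u v assume u: "u \<in> V" and v: "v \<in> V" and uv: "{u, v} \<in> E"
      show "weight V E f u + (if u = r then a else 0) \<noteq> weight V E f v + (if v = r then a else 0)"
      proof (cases "{u, v} = {r, x}")
        case True
        then have "(u = r \<and> v = x) \<or> (u = x \<and> v = r)" by (auto simp: doubleton_eq_iff)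
        have W1: "weight V E f r + (if r = r then a else 0) = cc"
          unfolding Wr[OF rVr] cc_def by simp
        have W2: "weight V E f x + (if x = r then a else 0) = weight Vx Ex fx x + y"
          unfolding Wx[OF xVx] by simp
        show ?thesis
          using \<open>(u = r \<and> v = x) \<or> (u = x \<and> v = r)\<close> W1 W2 fx(4) by auto
      next
        case False
        then have "{u, v} \<in> Er \<or> {u, v} \<in> Ex" using uv EE by auto
        then show ?thesis
        proof
          assume h: "{u, v} \<in> Er"
          then have "u \<in> Vr" "v \<in> Vr" using ErV by auto
          then show ?thesis unfolding Wr[OF \<open>u \<in> Vr\<close>] Wr[OF \<open>v \<in> Vr\<close>] using fr(3) h by blast
        next
          assume h: "{u, v} \<in> Ex"
          then have "u \<in> Vx" "v \<in> Vx" using ExV by auto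
          then show ?thesis unfolding Wx[OF \<open>u \<in> Vx\<close>] Wx[OF \<open>v \<in> Vx\<close>] using fx(3) h by blast
        qed
      qed
    next
      show "weight V E f r + a \<noteq> c" using Wr[OF rVr] fr(4) by (simp add: algebra_simps)
    qed
  next
    case False
    then have a0: "a \<noteq> 0" using less.prems(3) by blast
    have leaf: "{r, x} \<in> E \<Longrightarrow> {x, z} \<in> E \<Longrightarrow> z = r" for x z using False by blast
    define L where "L = {x\<in>V. {r, x} \<in> E}"
    have rL: "r \<notin> L" using edge_card[OF sg, of r r] by (auto simp: L_def)
    have reach: "(adj E)\<^sup>*\<^sup>* r v \<Longrightarrow> v \<in> insert r L" for v
    proof (induction rule: rtranclp_induct)
      case (step y z)
      have yz: "{y, z} \<in> E" using step(2) by (simp add: adj_def)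
      show ?case
      proof (cases "y = r")
        case True then show ?thesis using yz edge_sub[OF sg yz] by (auto simp: L_def)
      next
        case False
        then have "{r, y} \<in> E" using step(3) by (auto simp: L_def)
        then show ?thesis using leaf yz by blast
      qed
    qed simp
    have VL: "V = insert r L"
    proof
      show "V \<subseteq> insert r L"
      proof
        fix v assume "v \<in> V"
        then have "(adj E)\<^sup>*\<^sup>* r v" using con rV by (simp add: connected_rtr)
        then show "v \<in> insert r L" by (rule reach)
      qed
    qed (use rV in \<open>auto simp: L_def\<close>)
    have edges: "e \<in> E \<Longrightarrow> \<exists>l\<in>L. e = {r, l}" for e
    proof -
      assume e: "e \<in> E"
      obtain u w where uw: "e = {u, w}" "u \<noteq> w" using edge_ex[OF sg e] by blast
      have "u \<in> V" "w \<in> V" using edge_sub[OF sg] e uw by auto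
      show ?thesis
      proof (cases "u = r")
        case True
        then have "w \<in> L" using e uw \<open>w \<in> V\<close> by (auto simp: L_def)
        then show ?thesis using uw True by blast
      next
        case False
        then have "u \<in> L" using VL \<open>u \<in> V\<close> by blast
        then have "w = r" using leaf[of u w] e uw by (auto simp: L_def)
        then show ?thesis using \<open>u \<in> L\<close> uw by (auto simp: insert_commute)
      qed
    qed
    show ?thesis
    proof (cases "L = {}")
      case True
      then have V1: "V = {r}" using VL by simp
      then have "card V = 1" by simp
      then have ac: "a \<noteq> c" using less.prems(4) by simp
      have E0: "E = {}" using edges True by blast
      have w0: "weight V E f r = 0" for f :: "'a set \<Rightarrow> 'g" using E0 by (simp add: weight_def)
      show ?thesis using V1 E0 w0 a0 ac by (intro exI[of _ "\<lambda>_. 0"]) auto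
    next
      case Lne: False
      have finL: "finite L" using fin VL by auto
      obtain s :: 'g where s: "s \<notin> {0, c, a, 0}" using G by blast
      have "card L = 1 \<Longrightarrow> s - a \<noteq> 0 \<and> s - a \<noteq> s" using s a0 by auto
      then obtain g where g: "\<forall>l\<in>L. g l \<noteq> 0 \<and> g l \<noteq> s" "sum g L = s - a"
        using star_labels[OF G finL Lne, of s "s - a"] s by blast
      define f where "f e = sum g (L \<inter> e)" for e
      have frl: "f {r, l} = g l" if "l \<in> L" for l
      proof -
        have "L \<inter> {r, l} = {l}" using that rL by auto
        then show ?thesis by (simp add: f_def)
      qed
      have nr: "{u\<in>V. {u, r} \<in> E} = L" using VL rL by (auto simp: L_def insert_commute)
      have wr: "weight V E f r = s - a"
      proof -
        have "weight V E f r = (\<Sum>u\<in>L. f {u, r})" unfolding weight_def nr ..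
        also have "\<dots> = sum g L" using frl by (intro sum.cong) (auto simp: insert_commute)
        finally show ?thesis using g(2) by simp
      qed
      have nl: "{u\<in>V. {u, l} \<in> E} = {r}" if l: "l \<in> L" for l
      proof (intro set_eqI iffI)
        fix u assume "u \<in> {u\<in>V. {u, l} \<in> E}"
        then have "{l, u} \<in> E" by (simp add: insert_commute)
        moreover have "{r, l} \<in> E" using l by (simp add: L_def)
        ultimately show "u \<in> {r}" using leaf[of l u] by simp
      next
        fix u assume "u \<in> {r}"
        then have "u = r" by simp
        moreover have "{r, l} \<in> E" using l by (simp add: L_def)
        ultimately show "u \<in> {u\<in>V. {u, l} \<in> E}" using rV by (simp add: insert_commute)
      qed
      have wl: "weight V E f l = g l" if "l \<in> L" for l
        unfolding weight_def nl[OF that] using frl[OF that] by (simp add: insert_commute)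
      show ?thesis
      proof (intro exI[of _ f] conjI ballI impI)
        fix e assume "e \<in> E"
        then obtain l where "l \<in> L" "e = {r, l}" using edges by blast
        then show "f e \<noteq> 0" using frl g(1) by simp
      next
        fix v assume "v \<in> V"
        then show "weight V E f v + (if v = r then a else 0) \<noteq> 0"
          using VL wr wl g(1) s rL by auto
      next
        fix u v assume u: "u \<in> V" and v: "v \<in> V" and uv: "{u, v} \<in> E"
        then obtain l where l: "l \<in> L" "{u, v} = {r, l}" using edges by blast
        then have "(u = r \<and> v = l) \<or> (u = l \<and> v = r)" by (auto simp: doubleton_eq_iff)
        then show "weight V E f u + (if u = r then a else 0) \<noteq> weight V E f v + (if v = r then a else 0)"
          using wr wl[OF l(1)] g(1) l(1) rL by auto
      next
        show "weight V E f r + a \<noteq> c" using wr s by simp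
      qed
    qed
  qed
qed



theorem mainTheorem9:
  fixes V :: "'a set" and E :: "'a set set"
  assumes "is_tree V E"
    and "card V \<ge> 3"
    and "infinite (UNIV :: 'g::ab_group_add set) \<or> card (UNIV :: 'g set) \<ge> 5"
  shows "\<exists>f :: 'a set \<Rightarrow> 'g.
           (\<forall>e\<in>E. f e \<noteq> 0) \<and>
           (\<forall>v\<in>V. weight V E f v \<noteq> 0) \<and>
           (\<forall>u\<in>V. \<forall>v\<in>V. {u, v} \<in> E \<longrightarrow> weight V E f u \<noteq> weight V E f v)"
proof -
  have G: "\<exists>y. y \<notin> {p, q, s, t}" for p q s t :: 'g
  proof (rule ccontr)
    assume "\<not> (\<exists>y. y \<notin> {p, q, s, t})"
    then have U: "(UNIV :: 'g set) = {p, q, s, t}" by blast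
    have "card {p, q, s, t} \<le> 4"
      using card_length[of "[p, q, s, t]"] by simp
    moreover have "finite (UNIV :: 'g set)" unfolding U by simp
    then have "card (UNIV :: 'g set) \<ge> 5" using assms(3) by blast
    ultimately show False unfolding U by simp
  qed
  have tree: "is_tree V E" using assms(1) .
  have sg: "simple_graph V E" and fin: "finite V" and con: "connected_graph V E"
    using tree by (auto simp: is_tree_def simple_graph_def)
  have "\<exists>r x z. r \<in> V \<and> {r, x} \<in> E \<and> {x, z} \<in> E \<and> z \<noteq> r"
  proof (rule ccontr)
    assume H: "\<not> (\<exists>r x z. r \<in> V \<and> {r, x} \<in> E \<and> {x, z} \<in> E \<and> z \<noteq> r)"
    have "V \<noteq> {}" using assms(2) by auto
    then obtain r where rV: "r \<in> V" by blast
    define w where "w = (SOME w. {r, w} \<in> E)"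
    have reach: "(adj E)\<^sup>*\<^sup>* r v \<Longrightarrow> v = r \<or> {r, v} \<in> E" for v
    proof (induction rule: rtranclp_induct)
      case (step y z)
      have yz: "{y, z} \<in> E" using step(2) by (simp add: adj_def)
      show ?case
      proof (cases "y = r")
        case True then show ?thesis using yz by simp
      next
        case False
        then have "{r, y} \<in> E" using step(3) by simp
        then have "z = r" using H rV yz by blast
        then show ?thesis by simp
      qed
    qed simp
    have "V \<subseteq> {r, w}"
    proof
      fix v assume "v \<in> V"
      then have "(adj E)\<^sup>*\<^sup>* r v" using con rV by (simp add: connected_rtr)
      then have "v = r \<or> {r, v} \<in> E" by (rule reach)
      then show "v \<in> {r, w}"
      proof
        assume rv: "{r, v} \<in> E"
        then have rw: "{r, w} \<in> E" unfolding w_def by (rule someI)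
        have "{v, r} \<in> E" using rv by (simp add: insert_commute)
        then have "w = v" using H rw edge_sub[OF sg rv] by blast
        then show ?thesis by simp
      qed simp
    qed
    then have "card V \<le> card {r, w}" by (rule card_mono[rotated]) simp
    also have "\<dots> \<le> 2" by (simp add: card_insert_if)
    finally show False using assms(2) by simp
  qed
  then obtain r x z where rxz: "r \<in> V" "{r, x} \<in> E" "{x, z} \<in> E" "z \<noteq> r" by blast
  have "card V \<ge> 2" using assms(2) by simp
  then obtain f :: "'a set \<Rightarrow> 'g" where f: "\<forall>e\<in>E. f e \<noteq> 0"
      "\<forall>v\<in>V. weight V E f v + (if v = r then 0 else 0) \<noteq> 0"
      "\<forall>u\<in>V. \<forall>v\<in>V. {u, v} \<in> E \<longrightarrow>
         weight V E f u + (if u = r then 0 else 0) \<noteq> weight V E f v + (if v = r then 0 else 0)"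
    using mainQ[OF G tree rxz(1), of 0 0] rxz by blast
  show ?thesis using f by (intro exI[of _ f]) simp
qed

end
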